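(* Let $\tau>\tau_0>0$, $\gamma>0$, $\phi_0>0$ and $\varepsilon>0$. Let $\phi(t)\equiv\phi_0$ on $[-\tau,0]$, set $$A=\frac{\gamma(\phi_0+\varepsilon)}{1-e^{-\gamma(\tau-\tau_0)}},$$ and for $\delta>0$ let $f_\delta:\mathbb{R}\to\mathbb{R}$, $f_\delta(u)=A\,e^{-(u-\phi_0)^2/\delta}$. Let $u_\delta$ be the solution on $[-\tau,\infty)$ of $$u'(t)=-\gamma u(t)+f_\delta(u(t-\tau_0))-f_\delta(u(t-\tau))e^{-\gamma(\tau-\tau_0)}\ (t>0),\qquad u(t)=\phi(t)\ (-\tau\le t\le0).$$ Then $H_0(\phi):=\phi(0)-\int_{\tau_0}^{\tau}f_\delta(\phi(-a))e^{-\gamma(a-\tau_0)}da=-\varepsilon$ for every $\delta>0$, and there exists $\delta_0>0$ such that $u_\delta(\tau)<0$ for all $0<\delta<\delta_0$. *)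

theory Defs
  imports "HOL-Analysis.Analysis"
begin

definition f_delta :: "real \<Rightarrow> real \<Rightarrow> real \<Rightarrow> real \<Rightarrow> real" where
  "f_delta A phi0 \<delta> u = A * exp (- ((u - phi0)^2) / \<delta>)"

definition is_solution ::
  "real \<Rightarrow> real \<Rightarrow> real \<Rightarrow> (real \<Rightarrow> real) \<Rightarrow> (real \<Rightarrow> real) \<Rightarrow> (real \<Rightarrow> real) \<Rightarrow> bool" where
  "is_solution \<tau> \<tau>0 \<gamma> f \<phi> u \<longleftrightarrow>
     continuous_on {-\<tau>..} u \<and>
     (\<forall>t\<in>{-\<tau>..0}. u t = \<phi> t) \<and>
     (\<forall>t>0. (u has_real_derivative
          (- \<gamma> * u t + f (u (t - \<tau>0)) - f (u (t - \<tau>)) * exp (- \<gamma> * (\<tau> - \<tau>0)))) (at t))"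

end

theory Submission
  imports Defs
begin

lemma ind_has_int:
  fixes a b x y C :: real
  assumes "a \<le> b"
  shows "((\<lambda>r. if r \<in> {x..y} then C else 0) has_integral
          (if max x a \<le> min y b then min y b - max x a else 0) * C) {a..b}"
proof -
  have "((\<lambda>r. C) has_integral (Henstock_Kurzweil_Integration.content {max x a..min y b}) *\<^sub>R C) {max x a..min y b}"
    by (rule has_integral_const_real)
  then have "((\<lambda>r. C) has_integral (Henstock_Kurzweil_Integration.content {max x a..min y b}) *\<^sub>R C) ({x..y} \<inter> {a..b})"
    by (simp add: Int_atLeastAtMost)
  then show ?thesis
    by (subst has_integral_restrict_Int) simp
qed


lemma regime1:
  fixes f u \<phi> :: "real \<Rightarrow> real"
  assumes "\<tau>0 < \<tau>" "0 < \<tau>0" "0 < \<gamma>"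
    and phi: "\<forall>t\<in>{-\<tau>..0}. \<phi> t = \<phi>0"
    and sol: "is_solution \<tau> \<tau>0 \<gamma> f \<phi> u"
    and fA: "f \<phi>0 = A"
    and Aeq: "A * (1 - exp (- \<gamma> * (\<tau> - \<tau>0))) = \<gamma> * (\<phi>0 + \<epsilon>)"
    and t: "0 \<le> t" "t \<le> \<tau>0"
  shows "u t = \<phi>0 + \<epsilon> - \<epsilon> * exp (- \<gamma> * t)"
proof -
  define K where "K = \<phi>0 + \<epsilon>"
  define E where "E = exp (- \<gamma> * (\<tau> - \<tau>0))"
  define z where "z x = exp (\<gamma> * x) * (u x - K)" for x
  have cont: "continuous_on {-\<tau>..} u" and init: "\<forall>t\<in>{-\<tau>..0}. u t = \<phi> t"
    and der: "\<forall>t>0. (u has_real_derivative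
          (- \<gamma> * u t + f (u (t - \<tau>0)) - f (u (t - \<tau>)) * exp (- \<gamma> * (\<tau> - \<tau>0)))) (at t)"
    using sol unfolding is_solution_def by auto
  have u0: "u 0 = \<phi>0" using init phi assms(1,2) by auto
  have zc: "continuous_on {0..\<tau>0} z"
    unfolding z_def
    by (intro continuous_intros continuous_on_subset[OF cont]) (use assms in auto)
  have zd: "(z has_real_derivative 0) (at x)" if x: "0 < x" "x < \<tau>0" for x
  proof -
    have a: "u (x - \<tau>0) = \<phi>0" "u (x - \<tau>) = \<phi>0" using init phi x assms(1,2) by auto
    have du: "(u has_real_derivative (- \<gamma> * u x + A - A * E)) (at x)"
      using der x a fA unfolding E_def by fastforce
    have "(z has_real_derivative (\<gamma> * exp (\<gamma> * x)) * (u x - K) + exp (\<gamma> * x) * (- \<gamma> * u x + A - A * E)) (at x)"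
      unfolding z_def
      by (auto intro!: derivative_eq_intros du)
    moreover have "(\<gamma> * exp (\<gamma> * x)) * (u x - K) + exp (\<gamma> * x) * (- \<gamma> * u x + A - A * E) = 0"
    proof -
      have e: "A - A * E - \<gamma> * K = 0" using Aeq unfolding K_def E_def by (simp add: algebra_simps)
      have "(\<gamma> * exp (\<gamma> * x)) * (u x - K) + exp (\<gamma> * x) * (- \<gamma> * u x + A - A * E)
           = exp (\<gamma> * x) * (A - A * E - \<gamma> * K)" by (simp add: algebra_simps)
      then show ?thesis using e by simp
    qed
    ultimately show ?thesis by simp
  qed
  have "z t = z 0"
    by (rule DERIV_isconst2[OF assms(2) zc zd t]) auto
  then have "exp (\<gamma> * t) * (u t - K) = - \<epsilon>" using u0 unfolding z_def K_def by simp
  then have "u t - K = - \<epsilon> * exp (- \<gamma> * t)"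
    by (metis (no_types, opaque_lifting) exp_minus_inverse mult.assoc mult.commute mult_1 mult_minus_left)
  then show ?thesis unfolding K_def by simp
qed



lemma regime2:
  fixes f u \<phi> :: "real \<Rightarrow> real"
  assumes "\<tau>0 < \<tau>" "0 < \<tau>0" "0 < \<gamma>"
    and phi: "\<forall>t\<in>{-\<tau>..0}. \<phi> t = \<phi>0"
    and sol: "is_solution \<tau> \<tau>0 \<gamma> f \<phi> u"
    and fA: "f \<phi>0 = A"
    and fnn: "\<And>x. 0 \<le> f x" and fc: "continuous_on UNIV f"
    and Qeq: "Q * \<gamma> = A * exp (- \<gamma> * (\<tau> - \<tau>0))"
    and t: "\<tau>0 \<le> t" "t \<le> \<tau>"
  shows "exp (- \<gamma> * (t - \<tau>0)) * (u \<tau>0 + Q) - Q \<le> u t"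
    and "u t \<le> exp (- \<gamma> * (t - \<tau>0)) * (u \<tau>0 + Q) - Q + integral {\<tau>0..t} (\<lambda>r. f (u (r - \<tau>0)))"
proof -
  define g where "g r = f (u (r - \<tau>0))" for r
  define p where "p x = exp (\<gamma> * x) * (u x + Q)" for x
  define G where "G x = integral {\<tau>0..x} g" for x
  define q where "q x = p x - exp (\<gamma> * t) * G x" for x
  have cont: "continuous_on {-\<tau>..} u" and init: "\<forall>t\<in>{-\<tau>..0}. u t = \<phi> t"
    and der: "\<forall>t>0. (u has_real_derivative
          (- \<gamma> * u t + f (u (t - \<tau>0)) - f (u (t - \<tau>)) * exp (- \<gamma> * (\<tau> - \<tau>0)))) (at t)"
    using sol unfolding is_solution_def by auto
  have uc: "continuous_on {\<tau>0..t} u"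
    by (rule continuous_on_subset[OF cont]) (use assms in auto)
  have gc: "continuous_on {\<tau>0..t} g"
  proof -
    have "continuous_on {\<tau>0..t} (\<lambda>r. u (r - \<tau>0))"
      by (rule continuous_on_compose2[OF cont]) (use assms in \<open>auto intro!: continuous_intros\<close>)
    then show ?thesis unfolding g_def
      by (rule continuous_on_compose2[OF fc]) auto
  qed
  have pc: "continuous_on {\<tau>0..t} p" unfolding p_def
    by (intro continuous_intros uc)
  have Gc: "continuous_on {\<tau>0..t} G" unfolding G_def
    by (rule indefinite_integral_continuous_1[OF integrable_continuous_interval[OF gc]])
  have pd: "(p has_real_derivative exp (\<gamma> * x) * g x) (at x)" if x: "\<tau>0 < x" "x < t" for x
  proof -
    have a: "u (x - \<tau>) = \<phi>0" using init phi x assms(1,2) t by auto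
    have du: "(u has_real_derivative (- \<gamma> * u x + g x - \<gamma> * Q)) (at x)"
      using der x a fA assms(2) Qeq unfolding g_def by (fastforce simp: mult.commute)
    have "(p has_real_derivative (\<gamma> * exp (\<gamma> * x)) * (u x + Q) + exp (\<gamma> * x) * (- \<gamma> * u x + g x - \<gamma> * Q)) (at x)"
      unfolding p_def
      by (auto intro!: derivative_eq_intros du)
    moreover have "(\<gamma> * exp (\<gamma> * x)) * (u x + Q) + exp (\<gamma> * x) * (- \<gamma> * u x + g x - \<gamma> * Q) = exp (\<gamma> * x) * g x"
      by (simp add: algebra_simps)
    ultimately show ?thesis by simp
  qed
  have Gd: "(G has_real_derivative g x) (at x)" if x: "\<tau>0 < x" "x < t" for x
  proof -
    have "(G has_real_derivative g x) (at x within {\<tau>0..t})"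
      unfolding G_def by (rule integral_has_real_derivative[OF gc]) (use x in auto)
    then have "(G has_real_derivative g x) (at x within {\<tau>0<..<t})"
      by (rule DERIV_subset) auto
    moreover have "at x within {\<tau>0<..<t} = at x" by (rule at_within_open) (use x in auto)
    ultimately show ?thesis by simp
  qed
  have "p \<tau>0 \<le> p t"
    by (rule DERIV_nonneg_imp_increasing_open[OF t(1) _ pc])
       (use pd fnn in \<open>fastforce simp: g_def\<close>)
  then have "exp (\<gamma> * \<tau>0) * (u \<tau>0 + Q) \<le> exp (\<gamma> * t) * (u t + Q)" unfolding p_def .
  then have "exp (- \<gamma> * t) * (exp (\<gamma> * \<tau>0) * (u \<tau>0 + Q)) \<le> exp (- \<gamma> * t) * (exp (\<gamma> * t) * (u t + Q))"
    by (rule mult_left_mono) simp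
  moreover have "exp (- \<gamma> * t) * exp (\<gamma> * \<tau>0) = exp (- \<gamma> * (t - \<tau>0))" 
    by (simp add: exp_add[symmetric] algebra_simps)
  moreover have "exp (- \<gamma> * t) * exp (\<gamma> * t) = 1" 
    by (simp add: exp_add[symmetric])
  ultimately have "exp (- \<gamma> * (t - \<tau>0)) * (u \<tau>0 + Q) \<le> u t + Q"
    by (metis mult.assoc mult_1)
  then show "exp (- \<gamma> * (t - \<tau>0)) * (u \<tau>0 + Q) - Q \<le> u t" by simp
  have qc: "continuous_on {\<tau>0..t} q" unfolding q_def by (intro continuous_intros pc Gc)
  have qd: "\<exists>y. (q has_real_derivative y) (at x) \<and> y \<le> 0" if x: "\<tau>0 < x" "x < t" for x
  proof (intro exI conjI)
    show "(q has_real_derivative exp (\<gamma> * x) * g x - exp (\<gamma> * t) * g x) (at x)"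
      unfolding q_def by (rule DERIV_diff[OF pd[OF x] DERIV_cmult[OF Gd[OF x]]])
    have "exp (\<gamma> * x) \<le> exp (\<gamma> * t)" using x assms(3) by simp
    then show "exp (\<gamma> * x) * g x - exp (\<gamma> * t) * g x \<le> 0"
      using fnn[of "u (x - \<tau>0)"] unfolding g_def by (simp add: mult_right_mono)
  qed
  have "q t \<le> q \<tau>0"
    by (rule DERIV_nonpos_imp_decreasing_open[OF t(1) qd qc])
  moreover have "G \<tau>0 = 0" unfolding G_def by simp
  ultimately have "exp (\<gamma> * t) * (u t + Q) \<le> exp (\<gamma> * \<tau>0) * (u \<tau>0 + Q) + exp (\<gamma> * t) * G t"
    unfolding q_def p_def by simp
  then have "exp (- \<gamma> * t) * (exp (\<gamma> * t) * (u t + Q)) \<le> exp (- \<gamma> * t) * (exp (\<gamma> * \<tau>0) * (u \<tau>0 + Q) + exp (\<gamma> * t) * G t)"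
    by (rule mult_left_mono) simp
  moreover have "exp (- \<gamma> * t) * exp (\<gamma> * \<tau>0) = exp (- \<gamma> * (t - \<tau>0))" 
    by (simp add: exp_add[symmetric] algebra_simps)
  moreover have "exp (- \<gamma> * t) * exp (\<gamma> * t) = 1" 
    by (simp add: exp_add[symmetric])
  ultimately have "u t + Q \<le> exp (- \<gamma> * (t - \<tau>0)) * (u \<tau>0 + Q) + G t"
    by (simp add: algebra_simps)
  then show "u t \<le> exp (- \<gamma> * (t - \<tau>0)) * (u \<tau>0 + Q) - Q + integral {\<tau>0..t} (\<lambda>r. f (u (r - \<tau>0)))"
    unfolding G_def g_def by simp
qed


theorem proposition1:
  fixes \<tau> \<tau>0 \<gamma> \<phi>0 \<epsilon> A :: real
    and \<phi> :: "real \<Rightarrow> real"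
    and u :: "real \<Rightarrow> real \<Rightarrow> real"
  assumes "\<tau> > \<tau>0" and "\<tau>0 > 0" and "\<gamma> > 0" and "\<phi>0 > 0" and "\<epsilon> > 0"
    and "\<forall>t\<in>{-\<tau>..0}. \<phi> t = \<phi>0"
    and "A = \<gamma> * (\<phi>0 + \<epsilon>) / (1 - exp (- \<gamma> * (\<tau> - \<tau>0)))"
    and "\<forall>\<delta>>0. is_solution \<tau> \<tau>0 \<gamma> (f_delta A \<phi>0 \<delta>) \<phi> (u \<delta>)"
  shows "(\<forall>\<delta>>0. \<phi> 0 - integral {\<tau>0..\<tau>}
              (\<lambda>a. f_delta A \<phi>0 \<delta> (\<phi> (- a)) * exp (- \<gamma> * (a - \<tau>0))) = - \<epsilon>)
    \<and> (\<exists>\<delta>0>0. \<forall>\<delta>. 0 < \<delta> \<and> \<delta> < \<delta>0 \<longrightarrow> u \<delta> \<tau> < 0)"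
proof -
  note tt = assms(1) and t0 = assms(2) and g0 = assms(3) and p0 = assms(4) and e0 = assms(5)
    and phi = assms(6) and Adef = assms(7) and sols = assms(8)
  define E where "E = exp (- \<gamma> * (\<tau> - \<tau>0))"
  define K where "K = \<phi>0 + \<epsilon>"
  have E1: "E < 1" unfolding E_def using tt g0 by simp
  have E0: "0 < E" unfolding E_def by simp
  have A0: "0 < A" using Adef E1 g0 p0 e0 unfolding E_def by simp
  have Aeq: "A * (1 - E) = \<gamma> * K"
  proof -
    have "A = \<gamma> * K / (1 - E)" using Adef unfolding E_def K_def by simp
    then show ?thesis using E1 by simp
  qed
  have phi0: "\<phi> 0 = \<phi>0" using phi tt t0 by auto
  have fphi: "f_delta A \<phi>0 \<delta> \<phi>0 = A" for \<delta> by (simp add: f_delta_def)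
  have part1: "\<phi> 0 - integral {\<tau>0..\<tau>}
              (\<lambda>a. f_delta A \<phi>0 \<delta> (\<phi> (- a)) * exp (- \<gamma> * (a - \<tau>0))) = - \<epsilon>" for \<delta>
  proof -
    have "integral {\<tau>0..\<tau>} (\<lambda>a. f_delta A \<phi>0 \<delta> (\<phi> (- a)) * exp (- \<gamma> * (a - \<tau>0)))
        = integral {\<tau>0..\<tau>} (\<lambda>a. A * exp (- \<gamma> * (a - \<tau>0)))"
    proof (rule integral_cong)
      fix a assume "a \<in> {\<tau>0..\<tau>}"
      then have "\<phi> (- a) = \<phi>0" using phi t0 by auto
      then show "f_delta A \<phi>0 \<delta> (\<phi> (- a)) * exp (- \<gamma> * (a - \<tau>0)) = A * exp (- \<gamma> * (a - \<tau>0))"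
        by (simp add: fphi)
    qed
    also have "\<dots> = (- A / \<gamma> * exp (- \<gamma> * (\<tau> - \<tau>0))) - (- A / \<gamma> * exp (- \<gamma> * (\<tau>0 - \<tau>0)))"
    proof (rule integral_unique, rule fundamental_theorem_of_calculus)
      show "\<tau>0 \<le> \<tau>" using tt by simp
      fix x assume "x \<in> {\<tau>0..\<tau>}"
      have "((\<lambda>a. - A / \<gamma> * exp (- \<gamma> * (a - \<tau>0))) has_real_derivative
             (- A / \<gamma> * (exp (- \<gamma> * (x - \<tau>0)) * (- \<gamma> * (1 - 0))))) (at x within {\<tau>0..\<tau>})"
        by (intro derivative_eq_intros) auto
      moreover have "- A / \<gamma> * (exp (- \<gamma> * (x - \<tau>0)) * (- \<gamma> * (1 - 0))) = A * exp (- \<gamma> * (x - \<tau>0))"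
        using g0 by simp
      ultimately show "((\<lambda>a. - A / \<gamma> * exp (- \<gamma> * (a - \<tau>0))) has_vector_derivative
             A * exp (- \<gamma> * (x - \<tau>0))) (at x within {\<tau>0..\<tau>})"
        by (simp add: has_real_derivative_iff_has_vector_derivative)
    qed
    also have "\<dots> = A * (1 - E) / \<gamma>" unfolding E_def using g0 by (simp add: field_simps)
    also have "\<dots> = K" using Aeq g0 by simp
    finally show ?thesis using phi0 unfolding K_def by simp
  qed
  define Q where "Q = A * E / \<gamma>"
  define P where "P = K - \<epsilon> * exp (- \<gamma> * \<tau>0) + Q"
  define v where "v t = exp (- \<gamma> * (t - \<tau>0)) * P - Q" for t
  define \<theta> where "\<theta> = \<epsilon> * exp (- \<gamma> * \<tau>)"
  define \<kappa> where "\<kappa> = \<gamma> * E * P"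
  define L where "L = \<tau> - \<tau>0"
  have Q0: "0 < Q" unfolding Q_def using A0 E0 g0 by simp
  have Qg: "Q * \<gamma> = A * exp (- \<gamma> * (\<tau> - \<tau>0))" unfolding Q_def E_def using g0 by simp
  have ex1: "exp (- \<gamma> * \<tau>0) < 1" using g0 t0 by simp
  have Kgt: "\<phi>0 < K - \<epsilon> * exp (- \<gamma> * \<tau>0)" unfolding K_def using ex1 e0 by simp
  have P0: "0 < P" unfolding P_def using Kgt Q0 p0 by simp
  have th0: "0 < \<theta>" unfolding \<theta>_def using e0 by simp
  have k0: "0 < \<kappa>" unfolding \<kappa>_def using g0 E0 P0 by simp
  have L0: "0 < L" unfolding L_def using tt by simp
  have vtau: "v \<tau> = - \<theta>"
  proof -
    have "Q * (1 - E) = E * (A * (1 - E)) / \<gamma>" unfolding Q_def by (simp add: algebra_simps)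
    also have "\<dots> = E * K" using Aeq g0 by simp
    finally have "Q * (1 - E) = E * K" .
    moreover have "E * exp (- \<gamma> * \<tau>0) = exp (- \<gamma> * \<tau>)" unfolding E_def
      by (simp add: exp_add[symmetric] algebra_simps)
    moreover have "v \<tau> = E * (K - \<epsilon> * exp (- \<gamma> * \<tau>0)) - Q * (1 - E)"
      unfolding v_def P_def E_def by (simp add: algebra_simps)
    ultimately show ?thesis unfolding \<theta>_def by (simp add: algebra_simps)
  qed
  have vt0: "v \<tau>0 = K - \<epsilon> * exp (- \<gamma> * \<tau>0)" unfolding v_def P_def by simp
  have slope: "\<kappa> * (b - a) \<le> v a - v b" if ab: "\<tau>0 \<le> a" "a \<le> b" "b \<le> \<tau>" for a b
  proof -
    have "exp (- \<gamma> * (a - \<tau>0)) = exp (- \<gamma> * (b - \<tau>0)) * exp (\<gamma> * (b - a))"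
      by (simp add: exp_add[symmetric] algebra_simps)
    also have "\<dots> \<ge> exp (- \<gamma> * (b - \<tau>0)) * (1 + \<gamma> * (b - a))"
      by (intro mult_left_mono) (auto simp: exp_ge_add_one_self)
    finally have 1: "exp (- \<gamma> * (b - \<tau>0)) * (\<gamma> * (b - a)) \<le> exp (- \<gamma> * (a - \<tau>0)) - exp (- \<gamma> * (b - \<tau>0))"
      by (simp add: algebra_simps)
    have "E \<le> exp (- \<gamma> * (b - \<tau>0))" unfolding E_def using ab g0 by simp
    then have "E * (\<gamma> * (b - a)) \<le> exp (- \<gamma> * (b - \<tau>0)) * (\<gamma> * (b - a))"
      using ab g0 by (intro mult_right_mono) auto
    with 1 have "E * (\<gamma> * (b - a)) \<le> exp (- \<gamma> * (a - \<tau>0)) - exp (- \<gamma> * (b - \<tau>0))" by linarith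
    then have "P * (E * (\<gamma> * (b - a))) \<le> P * (exp (- \<gamma> * (a - \<tau>0)) - exp (- \<gamma> * (b - \<tau>0)))"
      using P0 by (intro mult_left_mono) auto
    then show ?thesis unfolding \<kappa>_def v_def by (simp add: algebra_simps)
  qed
  obtain c where c: "\<tau>0 \<le> c" "c \<le> \<tau>" "v c = \<phi>0"
  proof -
    have "\<exists>x. \<tau>0 \<le> x \<and> x \<le> \<tau> \<and> v x = \<phi>0"
      by (rule IVT2) (use vtau th0 p0 vt0 Kgt tt in \<open>auto simp: v_def intro!: continuous_intros\<close>)
    then show ?thesis using that by blast
  qed
  define w where "w = min (\<tau>0 / 2) (min \<theta> (\<kappa> * \<tau>0) / (32 * A))"
  define s1 where "s1 = min (\<kappa> * w) \<theta> / (4 * A)"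
  define m where "m = min (\<kappa> * w / 4) (min (\<kappa> * \<tau>0 / 16) (\<theta> / 4))"
  define \<eta>0 where "\<eta>0 = \<epsilon> * (1 - exp (- \<gamma> * s1))"
  define mu where "mu = min \<eta>0 (\<kappa> * w / 2)"
  define \<delta>0 where "\<delta>0 = mu^2 / (\<bar>ln (L * A / m)\<bar> + 1)"
  have w0: "0 < w" unfolding w_def using t0 th0 k0 A0 by simp
  have w1: "w \<le> \<tau>0 / 2" unfolding w_def by simp
  have w2: "2 * A * w \<le> \<kappa> * \<tau>0 / 16" and w3: "2 * A * w \<le> \<theta> / 16"
  proof -
    have "w \<le> min \<theta> (\<kappa> * \<tau>0) / (32 * A)" unfolding w_def by simp
    then have "w * (32 * A) \<le> min \<theta> (\<kappa> * \<tau>0)" using A0 by (simp add: field_simps)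
    then have a: "w * (32 * A) \<le> \<theta>" "w * (32 * A) \<le> \<kappa> * \<tau>0" by auto
    have "w * (32 * A) = 16 * (2 * A * w)" by (simp add: algebra_simps)
    then show "2 * A * w \<le> \<kappa> * \<tau>0 / 16" "2 * A * w \<le> \<theta> / 16" using a by linarith+
  qed
  have s10: "0 < s1" unfolding s1_def using k0 w0 th0 A0 by simp
  have s11: "A * s1 \<le> \<kappa> * w / 4" and s12: "A * s1 \<le> \<theta> / 4"
  proof -
    have "A * s1 = min (\<kappa> * w) \<theta> / 4" unfolding s1_def using A0 by simp
    then show "A * s1 \<le> \<kappa> * w / 4" "A * s1 \<le> \<theta> / 4" by (auto simp: min_def)
  qed
  have m0: "0 < m" unfolding m_def using k0 w0 t0 th0 by simp
  have m1: "m \<le> \<kappa> * w / 4" "m \<le> \<kappa> * \<tau>0 / 16" "m \<le> \<theta> / 4" unfolding m_def by auto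
  have eta0: "0 < \<eta>0" unfolding \<eta>0_def using e0 g0 s10 by simp
  have mupos: "0 < mu" unfolding mu_def using eta0 k0 w0 by simp
  have mub: "mu \<le> \<eta>0" "mu \<le> \<kappa> * w / 2" unfolding mu_def by auto
  have d0: "0 < \<delta>0" unfolding \<delta>0_def using mupos by (simp add: add_pos_nonneg)
  have kw: "\<kappa> * w \<le> \<kappa> * \<tau>0 / 2" using w1 k0 by (simp add: mult_left_mono)
  show ?thesis
  proof (intro conjI allI impI exI[of _ \<delta>0])
    show "\<phi> 0 - integral {\<tau>0..\<tau>} (\<lambda>a. f_delta A \<phi>0 \<delta> (\<phi> (- a)) * exp (- \<gamma> * (a - \<tau>0))) = - \<epsilon>"
      for \<delta> by (rule part1)
    show "0 < \<delta>0" by (rule d0)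
    fix \<delta> assume "0 < \<delta> \<and> \<delta> < \<delta>0"
    then have dpos: "0 < \<delta>" and dlt: "\<delta> < \<delta>0" by auto
    define f where "f = f_delta A \<phi>0 \<delta>"
    define U where "U = u \<delta>"
    have sol: "is_solution \<tau> \<tau>0 \<gamma> f \<phi> U" using sols dpos unfolding f_def U_def by auto
    have fA: "f \<phi>0 = A" unfolding f_def by (rule fphi)
    have fnn: "0 \<le> f x" for x unfolding f_def f_delta_def using A0 by simp
    have fle: "f x \<le> A" for x unfolding f_def f_delta_def using A0 dpos by simp
    have fc: "continuous_on UNIV f" unfolding f_def f_delta_def using dpos by (intro continuous_intros) auto
    have fsmall: "f x \<le> A * exp (- (mu^2) / \<delta>)" if "mu \<le> \<bar>x - \<phi>0\<bar>" for x
    proof -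
      have "mu^2 \<le> (x - \<phi>0)^2" using that mupos
        by (metis abs_le_square_iff abs_of_pos)
      then have "mu^2 / \<delta> \<le> (x - \<phi>0)^2 / \<delta>" using dpos by (simp add: divide_right_mono)
      then have "exp (- ((x - \<phi>0)^2) / \<delta>) \<le> exp (- (mu^2) / \<delta>)" by simp
      then show ?thesis unfolding f_def f_delta_def using A0 by (simp add: mult_left_mono)
    qed
    define e where "e = exp (- (mu^2) / \<delta>)"
    have e0': "0 \<le> e" unfolding e_def by simp
    have Tsmall: "L * A * e < m"
    proof -
      have LAm: "0 < L * A / m" using L0 A0 m0 by simp
      have "mu^2 / \<delta>0 < mu^2 / \<delta>" using dpos dlt mupos by (simp add: divide_strict_left_mono)
      moreover have "mu^2 / \<delta>0 = \<bar>ln (L * A / m)\<bar> + 1" unfolding \<delta>0_def using mupos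
        by (simp add: add_pos_nonneg)
      ultimately have "ln (L * A / m) < mu^2 / \<delta>" by linarith
      then have "exp (- (mu^2) / \<delta>) < exp (- ln (L * A / m))" by simp
      also have "\<dots> = m / (L * A)" using LAm L0 A0 m0 by (simp add: exp_minus ln_inverse[symmetric])
      finally have "e < m / (L * A)" unfolding e_def .
      then show ?thesis using L0 A0 by (simp add: field_simps)
    qed
    have R1: "U s = K - \<epsilon> * exp (- \<gamma> * s)" if "0 \<le> s" "s \<le> \<tau>0" for s
      using regime1[OF tt t0 g0 phi sol fA, of \<epsilon> s] Aeq that unfolding K_def E_def by simp
    have Ut0: "U \<tau>0 + Q = P" using R1[of \<tau>0] t0 unfolding P_def by simp
    define F where "F r = f (U (r - \<tau>0))" for r
    have R2: "v t \<le> U t" "U t \<le> v t + integral {\<tau>0..t} F" if "\<tau>0 \<le> t" "t \<le> \<tau>" for t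
      using regime2[OF tt t0 g0 phi sol fA fnn fc Qg that] Ut0 unfolding v_def F_def by auto
    have Fc: "continuous_on {\<tau>0..t} F" if "t \<le> \<tau>" for t
    proof -
      have cont: "continuous_on {-\<tau>..} U" using sol unfolding is_solution_def by auto
      have "continuous_on {\<tau>0..t} (\<lambda>r. U (r - \<tau>0))"
        by (rule continuous_on_compose2[OF cont]) (use that tt t0 in \<open>auto intro!: continuous_intros\<close>)
      then show ?thesis unfolding F_def
        by (rule continuous_on_compose2[OF fc]) auto
    qed
    define H where "H r = (if r \<in> {\<tau>0..\<tau>0 + s1} then A else 0)
       + (if r \<in> {c + \<tau>0 - w..c + \<tau>0 + w} then A else 0) + A * e" for r
    have HA: "A \<le> H r" if "r \<in> {\<tau>0..\<tau>0 + s1} \<or> r \<in> {c + \<tau>0 - w..c + \<tau>0 + w}" for r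
      using that A0 e0' unfolding H_def by auto
    have HAe: "A * e \<le> H r" for r using A0 unfolding H_def by auto
    have Hint: "H integrable_on {\<tau>0..s} \<and> integral {\<tau>0..s} H \<le> A * s1 + (if s \<le> c + \<tau>0 - w then 0 else 2 * A * w) + L * A * e"
      if s: "\<tau>0 \<le> s" "s \<le> \<tau>" for s
    proof -
      define I1 where "I1 = (if max \<tau>0 \<tau>0 \<le> min (\<tau>0 + s1) s then min (\<tau>0 + s1) s - max \<tau>0 \<tau>0 else 0) * A"
      define I2 where "I2 = (if max (c + \<tau>0 - w) \<tau>0 \<le> min (c + \<tau>0 + w) s then min (c + \<tau>0 + w) s - max (c + \<tau>0 - w) \<tau>0 else 0) * A"
      have "(H has_integral (I1 + I2 + (Henstock_Kurzweil_Integration.content {\<tau>0..s}) *\<^sub>R (A * e))) {\<tau>0..s}"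
        unfolding H_def I1_def I2_def
        by (intro has_integral_add ind_has_int has_integral_const_real s)
      moreover have "I1 \<le> A * s1" unfolding I1_def using A0 s10
        by (auto simp: min_def max_def intro!: mult_right_mono)
      moreover have "I2 \<le> (if s \<le> c + \<tau>0 - w then 0 else 2 * A * w)"
      proof -
        have "(if max (c + \<tau>0 - w) \<tau>0 \<le> min (c + \<tau>0 + w) s then min (c + \<tau>0 + w) s - max (c + \<tau>0 - w) \<tau>0 else 0)
              \<le> (if s \<le> c + \<tau>0 - w then 0 else 2 * w)" using w0 by (auto simp: min_def max_def)
        then have "I2 \<le> (if s \<le> c + \<tau>0 - w then 0 else 2 * w) * A"
          unfolding I2_def using A0 by (intro mult_right_mono) auto
        then show ?thesis by (auto split: if_splits simp: mult.commute mult.left_commute)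
      qed
      moreover have "(Henstock_Kurzweil_Integration.content {\<tau>0..s}) *\<^sub>R (A * e) \<le> L * A * e"
        using s A0 e0' unfolding L_def by (auto intro!: mult_right_mono)
      ultimately show ?thesis by (auto simp: integral_unique integrable_on_def)
    qed
    have D: "\<forall>s. 0 \<le> s \<longrightarrow> s \<le> L \<longrightarrow> s \<le> real n * \<tau>0 \<longrightarrow> f (U s) \<le> H (s + \<tau>0)" for n
    proof (induction n)
      case 0
      have "A \<le> H \<tau>0" using HA[of \<tau>0] s10 by auto
      then show ?case using fle[of "U 0"] by auto
    next
      case (Suc n)
      show ?case
      proof (intro allI impI)
        fix s assume s: "0 \<le> s" "s \<le> L" "s \<le> real (Suc n) * \<tau>0"
        show "f (U s) \<le> H (s + \<tau>0)"
        proof (cases "s \<le> s1 \<or> (c - w \<le> s \<and> s \<le> c + w)")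
          case True
          then have "s + \<tau>0 \<in> {\<tau>0..\<tau>0 + s1} \<or> s + \<tau>0 \<in> {c + \<tau>0 - w..c + \<tau>0 + w}" using s by auto
          then show ?thesis using HA fle order_trans by blast
        next
          case False
          then have ns1: "s1 < s" and nc: "s < c - w \<or> c + w < s" by auto
          have "mu \<le> \<bar>U s - \<phi>0\<bar>"
          proof (cases "s \<le> \<tau>0")
            case True
            have "exp (- \<gamma> * s) \<le> exp (- \<gamma> * s1)" using ns1 g0 by simp
            then have "\<epsilon> * exp (- \<gamma> * s) \<le> \<epsilon> * exp (- \<gamma> * s1)" using e0 by (intro mult_left_mono) auto
            then have "\<eta>0 \<le> U s - \<phi>0" using R1[OF s(1) True] unfolding \<eta>0_def K_def
              by (simp add: algebra_simps)
            then show ?thesis using mub by linarith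
          next
            case st0: False
            have sT: "s \<le> \<tau>" using s unfolding L_def using t0 by linarith
            show ?thesis
            proof (cases "s < c - w")
              case True
              have "\<kappa> * (c - s) \<le> v s - v c" by (rule slope) (use st0 True c w0 in auto)
              moreover have "\<kappa> * w \<le> \<kappa> * (c - s)" using True k0 by (intro mult_left_mono) auto
              moreover have "v s \<le> U s" using R2(1)[of s] st0 sT by linarith
              moreover have "0 \<le> \<kappa> * w" using k0 w0 by simp
              moreover have "U s - \<phi>0 \<le> \<bar>U s - \<phi>0\<bar>" by simp
              ultimately show ?thesis using c mub by linarith
            next
              case False
              with nc have scw: "c + w < s" by linarith
              have vs: "\<kappa> * (s - c) \<le> v c - v s" by (rule slope) (use c sT scw w0 in auto)
              have kw2: "\<kappa> * w \<le> \<kappa> * (s - c)" using scw k0 by (simp add: mult_left_mono)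
              have Us: "U s \<le> v s + integral {\<tau>0..s} F" using R2(2)[of s] st0 sT by linarith
              have FH: "integral {\<tau>0..s} F \<le> integral {\<tau>0..s} H"
              proof (rule integral_le)
                show "F integrable_on {\<tau>0..s}" by (rule integrable_continuous_interval[OF Fc[OF sT]])
                show "H integrable_on {\<tau>0..s}" using Hint[of s] st0 sT by auto
                fix r assume r: "r \<in> {\<tau>0..s}"
                have "r - \<tau>0 \<le> real n * \<tau>0" using r s by (simp add: algebra_simps)
                moreover have "0 \<le> r - \<tau>0" "r - \<tau>0 \<le> L" using r s t0 by auto
                ultimately have "f (U (r - \<tau>0)) \<le> H (r - \<tau>0 + \<tau>0)"
                  using Suc.IH by blast
                then show "F r \<le> H r" unfolding F_def by simp
              qed
              have Hb: "integral {\<tau>0..s} H \<le> A * s1 + (if s \<le> c + \<tau>0 - w then 0 else 2 * A * w) + L * A * e"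
                using Hint[of s] st0 sT by auto
              show ?thesis
              proof (cases "s \<le> c + \<tau>0 - w")
                case True
                then have "integral {\<tau>0..s} F \<le> \<kappa> * w / 2" using FH Hb s11 Tsmall m1 by auto
                then have "U s \<le> \<phi>0 - \<kappa> * w / 2" using Us vs kw2 c by linarith
                then show ?thesis using mub by linarith
              next
                case False
                then have "integral {\<tau>0..s} F \<le> \<kappa> * \<tau>0 / 4" using FH Hb s11 Tsmall m1 w2 kw by auto
                moreover have "\<kappa> * (\<tau>0 / 2) \<le> \<kappa> * (s - c)" using False w1 k0 by (intro mult_left_mono) auto
                ultimately have "U s \<le> \<phi>0 - \<kappa> * \<tau>0 / 4" using Us vs c by linarith
                then show ?thesis using mub kw by linarith
              qed
            qed
          qed
          then have "f (U s) \<le> A * e" using fsmall unfolding e_def by blast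
          then show ?thesis using HAe order_trans by blast
        qed
      qed
    qed
    have D': "f (U s) \<le> H (s + \<tau>0)" if "0 \<le> s" "s \<le> L" for s
    proof -
      obtain n where "s < real n * \<tau>0" using reals_Archimedean3[OF t0] by blast
      then show ?thesis using D[of n] that by auto
    qed
    have "integral {\<tau>0..\<tau>} F \<le> integral {\<tau>0..\<tau>} H"
    proof (rule integral_le)
      show "F integrable_on {\<tau>0..\<tau>}" by (rule integrable_continuous_interval[OF Fc]) simp
      show "H integrable_on {\<tau>0..\<tau>}" using Hint[of \<tau>] tt by auto
      fix r assume r: "r \<in> {\<tau>0..\<tau>}"
      have "f (U (r - \<tau>0)) \<le> H (r - \<tau>0 + \<tau>0)" by (rule D') (use r in \<open>auto simp: L_def\<close>)
      then show "F r \<le> H r" unfolding F_def by simp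
    qed
    moreover have "integral {\<tau>0..\<tau>} H \<le> A * s1 + 2 * A * w + L * A * e"
    proof -
      have "0 \<le> 2 * A * w" using A0 w0 by simp
      then show ?thesis using Hint[of \<tau>] tt by (auto split: if_splits)
    qed
    moreover have "U \<tau> \<le> v \<tau> + integral {\<tau>0..\<tau>} F" using R2(2)[of \<tau>] tt by simp
    ultimately have "U \<tau> \<le> - \<theta> + \<theta> / 4 + \<theta> / 16 + m" using vtau s12 w3 Tsmall by linarith
    then show "u \<delta> \<tau> < 0" unfolding U_def using m1 th0 by linarith
  qed
qed

end
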